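(* Suppose $\mathrm{char}\,\mathbb{F}=2$ and let $C$ be an $A$-code of length $2$ with canonical generator matrix $\begin{pmatrix}g_1&g_2\\0&g_3\end{pmatrix}$, where $g_1,g_3$ are nonzero monic divisors of $f$, $g_3\mid (f/g_1)g_2$ in $\mathbb{F}[x]$ and $\deg g_2<\deg g_3$. Then $C$ is self-dual ($C=C^\perp$) if and only if either (i) $g_1=g_3$, $g_2=0$ and $f=g_1^2$; or (ii) $f=g_1^2f'$, $g_3=g_1f'$ and $g_2=g_1\bigl(h\sqrt[2]{f'}+1\bigr)$ for some $f',h\in\mathbb{F}[x]$ with $\deg h<\deg f'-\deg\sqrt[2]{f'}$.
   Context: Let $\mathbb{F}$ be a finite field, $f(x)\in\mathbb{F}[x]$ monic of degree $m$, $A=\mathbb{F}[x]/\langle f(x)\rangle$, elements identified with polynomials of degree $<m$. An $A$-code of length $l$ is an $A$-submodule of $A^l$; $C^\perp=\{a\in A^l:\sum_ia_ic_i=0\ \forall c\in C\}$. The canonical generator matrix (CGM) of a nonzero $A$-code $C$ is the unique matrix over $A$ whose rows generate $C$, are monic with strictly increasing leading indices (position of first nonzero entry), have leading entries dividing $f$, satisfy that $(f/L_i)\cdot(\text{row }i)$ is an $A$-combination of later rows ($L_i$ the leading entry of row $i$), and such that every entry above a leading entry has smaller degree than it. For $h\in\mathbb{F}[x]$ with prime factorization $h=p_1^{a_1}\cdots p_t^{a_t}$ (monic irreducible $p_i$), $\sqrt[2]{h}=p_1^{\lceil a_1/2\rceil}\cdots p_t^{\lceil a_t/2\rceil}$.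 *)

theory Defs
  imports "HOL-Computational_Algebra.Computational_Algebra"
begin

text \<open>Elements of A = F[x]/(f) are identified with their reduced representatives
  (polynomials p with p mod f = p, i.e. of degree < deg f).\<close>

definition A_elems :: "'a::field poly \<Rightarrow> 'a poly set" where
  "A_elems f = {p. p mod f = p}"

definition code2 :: "'a::field poly \<Rightarrow> 'a poly \<Rightarrow> 'a poly \<Rightarrow> 'a poly \<Rightarrow> ('a poly \<times> 'a poly) set" where
  "code2 f g1 g2 g3 =
     {((u * g1) mod f, (u * g2 + v * g3) mod f) | u v. u \<in> A_elems f \<and> v \<in> A_elems f}"

definition dual2 :: "'a::field poly \<Rightarrow> ('a poly \<times> 'a poly) set \<Rightarrow> ('a poly \<times> 'a poly) set" where
  "dual2 f C = {(a, b). a \<in> A_elems f \<and> b \<in> A_elems f \<and>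
                   (\<forall>(c1, c2) \<in> C. (a * c1 + b * c2) mod f = 0)}"

definition sqrt2 :: "'a::field_gcd poly \<Rightarrow> 'a poly" where
  "sqrt2 h = (\<Prod>p\<in>prime_factors h. p ^ ((multiplicity p h + 1) div 2))"

end

theory Submission imports Defs begin

lemma monic_normalize: "lead_coeff (p::'a::field_gcd poly) = 1 \<Longrightarrow> normalize p = p"
  by (simp add: normalize_poly_eq_map_poly)

lemma char2_two:
  assumes "CHAR('a::field_gcd) = 2" shows "(2::'a poly) = 0"
proof -
  have "(2::'a) = 0" using of_nat_CHAR[where 'a='a] assms by simp
  thus ?thesis by (metis of_nat_numeral of_nat_poly pCons_0_0 smult_0_left smult_pCons  numeral_2_eq_2)
qed

lemma char2_add_self:
  fixes x :: "'a::field_gcd poly"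
  assumes "CHAR('a) = 2" shows "x + x = 0"
proof -
  have "(2::'a) = 0" using of_nat_CHAR[where 'a='a] assms by simp
  hence "(2::'a poly) = 0" by (metis of_nat_numeral of_nat_poly pCons_0_0 smult_0_left smult_pCons  numeral_2_eq_2)
  thus ?thesis by (metis mult_2 mult_zero_left)
qed

lemma sqrt2_nz: "sqrt2 (f::'a::field_gcd poly) \<noteq> 0"
  unfolding sqrt2_def by (auto simp: in_prime_factors_iff)

lemma mult_sqrt2:
  fixes f :: "'a::field_gcd poly"
  assumes "prime p"
  shows "multiplicity p (sqrt2 f) = (if p \<in> prime_factors f then (multiplicity p f + 1) div 2 else 0)"
  unfolding sqrt2_def
  by (rule multiplicity_prod_prime_powers) (auto simp: assms in_prime_factors_iff)

lemma dvd_sqrt2_sq: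
  fixes f :: "'a::field_gcd poly"
  assumes "f \<noteq> 0" shows "f dvd (sqrt2 f)^2"
proof (rule multiplicity_le_imp_dvd[OF assms])
  fix p :: "'a poly" assume p: "prime p"
  show "multiplicity p f \<le> multiplicity p ((sqrt2 f)^2)"
  proof (cases "p \<in> prime_factors f")
    case True
    thus ?thesis using p sqrt2_nz[of f]
      by (simp add: prime_elem_multiplicity_power_distrib mult_sqrt2)
  next
    case False
    hence "\<not> p dvd f" using p assms by (simp add: in_prime_factors_iff)
    thus ?thesis by (simp add: not_dvd_imp_multiplicity_0)
  qed
qed

lemma sqrt2_dvd:
  fixes f q :: "'a::field_gcd poly"
  assumes "f \<noteq> 0" "f dvd q^2" shows "sqrt2 f dvd q"
proof (cases "q = 0")
  case True thus ?thesis by simp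
next
  case False
  show ?thesis
  proof (rule multiplicity_le_imp_dvd[OF sqrt2_nz])
    fix p :: "'a poly" assume p: "prime p"
    have "multiplicity p f \<le> multiplicity p (q^2)"
      using assms False by (intro dvd_imp_multiplicity_le) auto
    also have "\<dots> = 2 * multiplicity p q" using p False
      by (simp add: prime_elem_multiplicity_power_distrib)
    finally have "multiplicity p f \<le> 2 * multiplicity p q" .
    thus "multiplicity p (sqrt2 f) \<le> multiplicity p q"
      using p by (simp add: mult_sqrt2) presburger
  qed
qed

lemma mod_dvd_diff: "(f::'a::field_gcd poly) dvd (x mod f) - x"
  by (metis mod_eq_dvd_iff mod_mod_trivial)

lemma mod_eqI: "(f::'a::field_gcd poly) dvd x - y \<Longrightarrow> x mod f = y mod f"
  by (simp add: mod_eq_dvd_iff)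

lemma mod_lin2: "((x mod f)*a + (y mod f)*b) mod (f::'a::field_gcd poly) = (x*a+y*b) mod f"
proof (rule mod_eqI)
  have "(x mod f)*a + (y mod f)*b - (x*a+y*b) = ((x mod f) - x)*a + ((y mod f) - y)*b"
    by (simp add: algebra_simps)
  thus "f dvd (x mod f)*a + (y mod f)*b - (x*a+y*b)"
    by (simp add: dvd_add dvd_mult2 mod_dvd_diff)
qed

lemma mod_lin1: "((x mod f)*a) mod (f::'a::field_gcd poly) = (x*a) mod f"
  using mod_lin2[of x f a 0 0] by simp

lemma memC:
  fixes f g1 g2 g3 :: "'a::field_gcd poly"
  shows "(a,b) \<in> code2 f g1 g2 g3 \<longleftrightarrow> (\<exists>u v. a = u*g1 mod f \<and> b = (u*g2+v*g3) mod f)"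
proof
  assume "(a,b) \<in> code2 f g1 g2 g3" thus "\<exists>u v. a = u*g1 mod f \<and> b = (u*g2+v*g3) mod f"
    unfolding code2_def by blast
next
  assume "\<exists>u v. a = u*g1 mod f \<and> b = (u*g2+v*g3) mod f"
  then obtain u v where uv: "a = u*g1 mod f" "b = (u*g2+v*g3) mod f" by blast
  have "a = ((u mod f)*g1) mod f" "b = ((u mod f)*g2+(v mod f)*g3) mod f"
    using uv mod_lin2[of u f g1 0 0] mod_lin2[of u f g2 v g3] by simp_all
  moreover have "u mod f \<in> A_elems f" "v mod f \<in> A_elems f" by (simp_all add: A_elems_def)
  ultimately show "(a,b) \<in> code2 f g1 g2 g3" unfolding code2_def by blast
qed

lemma memD:
  fixes f g1 g2 g3 :: "'a::field_gcd poly"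
  shows "(a,b) \<in> dual2 f (code2 f g1 g2 g3) \<longleftrightarrow>
     a mod f = a \<and> b mod f = b \<and> f dvd a*g1+b*g2 \<and> f dvd b*g3"
proof
  assume H: "(a,b) \<in> dual2 f (code2 f g1 g2 g3)"
  have c1: "(g1 mod f, g2 mod f) \<in> code2 f g1 g2 g3"
    unfolding memC by (rule exI[of _ 1], rule exI[of _ 0]) simp
  have c2: "(0, g3 mod f) \<in> code2 f g1 g2 g3"
    unfolding memC by (rule exI[of _ 0], rule exI[of _ 1]) simp
  from H have red: "a mod f = a" "b mod f = b" by (auto simp: dual2_def A_elems_def)
  from H c1 have "(a*(g1 mod f) + b*(g2 mod f)) mod f = 0" unfolding dual2_def by auto
  hence "(a*g1+b*g2) mod f = 0" using mod_lin2[of g1 f a g2 b] by (simp add: mult.commute)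
  moreover from H c2 have "(a*0 + b*(g3 mod f)) mod f = 0" unfolding dual2_def by auto
  hence "(b*g3) mod f = 0" using mod_lin2[of g3 f b 0 0] by (simp add: mult.commute)
  ultimately show "a mod f = a \<and> b mod f = b \<and> f dvd a*g1+b*g2 \<and> f dvd b*g3"
    using red by (simp add: dvd_eq_mod_eq_0)
next
  assume H: "a mod f = a \<and> b mod f = b \<and> f dvd a*g1+b*g2 \<and> f dvd b*g3"
  have "(a*c1+b*c2) mod f = 0" if cc: "(c1,c2) \<in> code2 f g1 g2 g3" for c1 c2
  proof -
    obtain u v where uv: "c1 = u*g1 mod f" "c2 = (u*g2+v*g3) mod f" using cc unfolding memC by blast
    have "(a*c1+b*c2) mod f = (u*(a*g1+b*g2) + v*(b*g3)) mod f"
      unfolding uv using mod_lin2[of "u*g1" f a "u*g2+v*g3" b]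
      by (simp add: algebra_simps)
    also have "\<dots> = 0" using H by (simp add: dvd_eq_mod_eq_0[symmetric])
    finally show ?thesis .
  qed
  thus "(a,b) \<in> dual2 f (code2 f g1 g2 g3)" using H unfolding dual2_def A_elems_def by auto
qed

lemma memC_fst: fixes f g1 g2 g3 :: "'a::field_gcd poly" shows "(a,b) \<in> code2 f g1 g2 g3 \<Longrightarrow> g1 dvd f \<Longrightarrow> g1 dvd a"
  unfolding memC by (auto simp: dvd_mod_iff)

lemma suff:
  fixes f g1 g2 g3 f' m :: "'a::field_gcd poly"
  assumes f: "f = g1*g1*f'" and g3: "g3 = g1*f'" and g2: "g2 = g1*m"
    and dv: "f' dvd 1 + m*m" and fnz: "f \<noteq> 0"
  shows "code2 f g1 g2 g3 = dual2 f (code2 f g1 g2 g3)"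
proof (intro set_eqI iffI)
  have g1nz: "g1 \<noteq> 0" and f'nz: "f' \<noteq> 0" using fnz f by auto
  fix x assume "x \<in> code2 f g1 g2 g3"
  then obtain a b u v where x: "x = (a,b)" and ab: "a = u*g1 mod f" "b = (u*g2+v*g3) mod f"
    by (metis memC surj_pair)
  have "f dvd a*g1+b*g2"
  proof -
    have "(a*g1+b*g2) mod f = (u*(g1*g1+g2*g2) + v*(g3*g2)) mod f"
      unfolding ab using mod_lin2[of "u*g1" f g1 "u*g2+v*g3" g2]
      by (simp add: algebra_simps)
    moreover have "f dvd u*(g1*g1+g2*g2) + v*(g3*g2)"
    proof -
      have "g1*g1+g2*g2 = g1*g1*(1+m*m)" "g3*g2 = f*m" using f g2 g3 by (simp_all add: algebra_simps)
      thus ?thesis using dv f by (auto intro!: dvd_add dvd_mult mult_dvd_mono)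
    qed
    ultimately show ?thesis by (simp add: dvd_eq_mod_eq_0)
  qed
  moreover have "f dvd b*g3"
  proof -
    have "(b*g3) mod f = (u*(g2*g3) + v*(g3*g3)) mod f"
      unfolding ab using mod_lin2[of "u*g2+v*g3" f g3 0 0]
      by (simp add: algebra_simps)
    moreover have "g2*g3 = f*m" "g3*g3 = f*f'" using f g2 g3 by (simp_all add: algebra_simps)
    moreover have "f dvd u*(f*m) + v*(f*f')" by (simp add: dvd_add)
    ultimately show ?thesis by (simp add: dvd_eq_mod_eq_0)
  qed
  ultimately show "x \<in> dual2 f (code2 f g1 g2 g3)" unfolding x memD ab by simp
next
  have g1nz: "g1 \<noteq> 0" and f'nz: "f' \<noteq> 0" using fnz f by auto
  fix x assume "x \<in> dual2 f (code2 f g1 g2 g3)"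
  then obtain a b where x: "x = (a,b)" and H: "a mod f = a" "b mod f = b" "f dvd a*g1+b*g2" "f dvd b*g3"
    by (metis memD surj_pair)
  have "g1*(g1*f') dvd b*(g1*f')" using H(4) f g3 by (simp add: mult.assoc)
  hence "g1 dvd b" using g1nz f'nz by simp
  then obtain b1 where b1: "b = g1*b1" by blast
  have "(g1*f')*g1 dvd (a + g1*b1*m)*g1" using H(3) f b1 g2 by (simp add: algebra_simps)
  hence d1: "g1*f' dvd a + g1*b1*m" using g1nz dvd_times_right_cancel_iff by blast
  hence "g1 dvd a + g1*b1*m" by (rule dvd_mult_left)
  hence "g1 dvd a" by (simp add: dvd_add_left_iff mult.assoc)
  then obtain a1 where a1: "a = g1*a1" by blast
  have "g1*f' dvd g1*(a1 + b1*m)" using d1 a1 by (simp add: algebra_simps)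
  hence "f' dvd a1 + b1*m" using g1nz by simp
  then obtain r where r: "a1 + b1*m = f'*r" by blast
  obtain w where w: "1 + m*m = f'*w" using dv by blast
  define v where "v = b1*w - m*r"
  have "b1 = b1*(1+m*m) - m*(a1 + b1*m) + a1*m" by (simp add: algebra_simps)
  also have "\<dots> = f'*v + a1*m" unfolding v_def w r by (simp add: algebra_simps)
  finally have "b = a1*g2 + v*g3" using b1 g2 g3 by (simp add: algebra_simps)
  hence "a = a1*g1 mod f \<and> b = (a1*g2+v*g3) mod f" using H(1,2) a1 by (simp add: mult.commute)
  thus "x \<in> code2 f g1 g2 g3" unfolding x memC by blast
qed

lemma memC_zero:
  fixes f g1 g2 g3 f1 k :: "'a::field_gcd poly"
  assumes "(0,b) \<in> code2 f g1 g2 g3" "f = g1*f1" "f1*g2 = g3*k" "g3 dvd f" "g1 \<noteq> 0"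
  shows "g3 dvd b"
proof -
  obtain u v where uv: "0 = u*g1 mod f" "b = (u*g2+v*g3) mod f" using assms(1) unfolding memC by blast
  have "g1*f1 dvd u*g1" using uv(1) assms(2) by (simp add: dvd_eq_mod_eq_0)
  hence "f1 dvd u" using assms(5) by (simp add: mult.commute)
  then obtain w where w: "u = f1*w" by blast
  have "u*g2+v*g3 = g3*(k*w+v)" using w assms(3) by (simp add: algebra_simps)
  hence "g3 dvd u*g2+v*g3" by simp
  thus ?thesis using uv(2) assms(4) by (simp add: dvd_mod_iff)
qed

lemma nec:
  fixes f g1 g2 g3 :: "'a::field_gcd poly"
  assumes char2: "CHAR('a) = 2"
    and f_monic: "lead_coeff f = 1"
    and g1_monic: "lead_coeff g1 = 1" and g1_dvd: "g1 dvd f"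
    and g3_monic: "lead_coeff g3 = 1" and g3_dvd: "g3 dvd f"
    and g3_dvd2: "g3 dvd (f div g1) * g2"
    and SD: "code2 f g1 g2 g3 = dual2 f (code2 f g1 g2 g3)"
  shows "\<exists>f' m. f = g1*g1*f' \<and> g3 = g1*f' \<and> g2 = g1*m \<and> f' dvd 1 + m*m \<and> coprime f' m \<and> lead_coeff f' = 1"
proof -
  have fnz: "f \<noteq> 0" and g1nz: "g1 \<noteq> 0" and g3nz: "g3 \<noteq> 0" using f_monic g1_monic g3_monic by auto
  obtain f1 where f1: "f = g1*f1" using g1_dvd by blast
  have f1d: "f div g1 = f1" using f1 g1nz by simp
  obtain k where k: "f1*g2 = g3*k" using g3_dvd2 f1d by (auto elim: dvdE)
  obtain e3 where e3: "f = g3*e3" using g3_dvd by blast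
  have "g3*(e3*g2) = g3*(g1*k)" using f1 e3 k by (metis mult.assoc mult.left_commute)
  hence e3k: "e3*g2 = g1*k" using g3nz by simp
  have inD: "(a,b) \<in> code2 f g1 g2 g3" if "a mod f = a" "b mod f = b" "f dvd a*g1+b*g2" "f dvd b*g3" for a b
    using that SD memD by metis
  have "(f1 mod f, 0) \<in> code2 f g1 g2 g3"
  proof (rule inD)
    have "(f1 mod f * g1 + 0 * g2) mod f = 0" using mod_lin2[of f1 f g1 0 0] f1 by (simp add: mult.commute)
    thus "f dvd f1 mod f * g1 + 0 * g2" by (simp add: dvd_eq_mod_eq_0)
  qed simp_all
  hence "g1 dvd f1 mod f" using memC_fst g1_dvd by blast
  hence "g1 dvd f1" using g1_dvd by (simp add: dvd_mod_iff)
  then obtain f' where f': "f1 = g1*f'" by blast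
  have ff': "f = g1*g1*f'" using f1 f' by simp
  have f'nz: "f' \<noteq> 0" using ff' fnz by auto
  have f'monic: "lead_coeff f' = 1" using ff' f_monic g1_monic by (simp add: lead_coeff_mult)
  have two: "x + x = 0" for x :: "'a poly" using char2_add_self[OF char2] .
  have "(k mod f, e3 mod f) \<in> code2 f g1 g2 g3"
  proof (rule inD)
    have "(k mod f * g1 + e3 mod f * g2) mod f = (k*g1 + e3*g2) mod f" by (rule mod_lin2)
    also have "k*g1 + e3*g2 = 0" using e3k two by (simp add: mult.commute)
    finally show "f dvd k mod f * g1 + e3 mod f * g2" by (simp add: dvd_eq_mod_eq_0)
    have "(e3 mod f * g3) mod f = (e3*g3) mod f" by (rule mod_lin1)
    thus "f dvd e3 mod f * g3" using e3 by (simp add: dvd_eq_mod_eq_0 mult.commute)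
  qed simp_all
  hence "g1 dvd k mod f" using memC_fst g1_dvd by blast
  hence "g1 dvd k" using g1_dvd by (simp add: dvd_mod_iff)
  then obtain m where m: "k = g1*m" by blast
  have "g1*(f'*g2) = g1*(g3*m)" using k f' m by (simp add: algebra_simps)
  hence f'g2: "f'*g2 = g3*m" using g1nz by simp
  have "g3*(e3*g2) = g3*(g1*g1*m)" using e3k m by simp
  have c1: "(g1 mod f, g2 mod f) \<in> code2 f g1 g2 g3"
    unfolding memC by (rule exI[of _ 1], rule exI[of _ 0]) simp
  have c2: "(0, g3 mod f) \<in> code2 f g1 g2 g3"
    unfolding memC by (rule exI[of _ 0], rule exI[of _ 1]) simp
  have "(g1 mod f, g2 mod f) \<in> dual2 f (code2 f g1 g2 g3)" using c1 SD by metis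
  hence "f dvd (g1 mod f)*g1 + (g2 mod f)*g2" "f dvd (g2 mod f)*g3"
    unfolding memD by blast+
  moreover have "((g1 mod f)*g1 + (g2 mod f)*g2) mod f = (g1*g1+g2*g2) mod f" by (rule mod_lin2)
  moreover have "((g2 mod f)*g3) mod f = (g2*g3) mod f" by (rule mod_lin1)
  ultimately have D1: "f dvd g1*g1+g2*g2" and D2: "f dvd g2*g3" by (simp_all add: dvd_eq_mod_eq_0)
  have "(0, g3 mod f) \<in> dual2 f (code2 f g1 g2 g3)" using c2 SD by metis
  hence "f dvd (g3 mod f)*g3" unfolding memD by blast
  moreover have "((g3 mod f)*g3) mod f = (g3*g3) mod f" by (rule mod_lin1)
  ultimately have D3: "f dvd g3*g3" by (simp add: dvd_eq_mod_eq_0)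
  obtain q where q: "g2*g3 = f*q" using D2 by blast
  have "g3*g2 = g3*(e3*q)" using q e3 by (simp add: algebra_simps)
  hence g2q: "g2 = e3*q" using g3nz by simp
  have "g2*g2 = g1*g1*(m*q)" using g2q e3k m by (metis mult.assoc mult.left_commute)
  hence "g1*g1+g2*g2 = (g1*g1)*(1+m*q)" by (simp add: algebra_simps)
  hence "(g1*g1)*f' dvd (g1*g1)*(1+m*q)" using D1 ff' by simp
  hence f'mq: "f' dvd 1+m*q" using g1nz by simp
  have cop: "coprime f' m"
  proof (rule coprimeI)
    fix c assume "c dvd f'" "c dvd m"
    hence "c dvd 1+m*q" "c dvd m*q" using f'mq by (auto intro: dvd_trans)
    thus "is_unit c" by (simp add: dvd_add_left_iff)
  qed
  have "f' dvd g3*m" using f'g2 by (metis dvd_triv_left)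
  hence "f' dvd g3" using cop by (simp add: coprime_dvd_mult_left_iff)
  then obtain t where t: "g3 = f'*t" by blast
  have "f'*g2 = f'*(t*m)" using f'g2 t by (simp add: algebra_simps)
  hence g2t: "g2 = t*m" using f'nz by simp
  have tmonic: "lead_coeff t = 1" using t g3_monic f'monic by (simp add: lead_coeff_mult)
  have tnz: "t \<noteq> 0" using tmonic by auto
  have tf: "t dvd f" using t g3_dvd by (metis dvd_mult_right dvd_trans mult.commute)
  obtain ft where ft: "f = t*ft" using tf by blast
  have "(0, ft mod f) \<in> code2 f g1 g2 g3"
  proof (rule inD)
    have "(ft mod f * g2) mod f = (ft*g2) mod f" by (rule mod_lin1)
    moreover have "ft*g2 = f*m" using ft g2t by (simp add: algebra_simps)
    ultimately show "f dvd 0 * g1 + ft mod f * g2" by (simp add: dvd_eq_mod_eq_0)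
    have "(ft mod f * g3) mod f = (ft*g3) mod f" by (rule mod_lin1)
    moreover have "ft*g3 = f*f'" using ft t by (simp add: algebra_simps)
    ultimately show "f dvd ft mod f * g3" by (simp add: dvd_eq_mod_eq_0)
  qed simp_all
  hence "g3 dvd ft mod f" using memC_zero[OF _ f1 k g3_dvd g1nz] by blast
  hence "g3 dvd ft" using g3_dvd by (simp add: dvd_mod_iff)
  hence "t*g3 dvd t*ft" by simp
  hence "f'*(t*t) dvd f'*(g1*g1)" using t ft ff' by (simp add: algebra_simps)
  hence tt1: "t*t dvd g1*g1" using f'nz by simp
  have "f' * (g1*g1) dvd f' * (t*t*m)" using D2 ff' g2t t by (simp add: algebra_simps)
  hence A1: "g1*g1 dvd (t*t)*m" using f'nz by simp
  have "f' * (g1*g1) dvd f' * (t*t*f')" using D3 ff' t by (simp add: algebra_simps)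
  hence A2: "g1*g1 dvd (t*t)*f'" using f'nz by simp
  have "g1*g1 dvd gcd ((t*t)*m) ((t*t)*f')" using A1 A2 by simp
  also have "gcd ((t*t)*m) ((t*t)*f') = normalize (t*t * gcd m f')" by (rule gcd_mult_left)
  also have "gcd m f' = 1" using cop by (simp add: coprime_commute)
  also have "normalize (t*t*1) = t*t" using tmonic by (simp add: monic_normalize lead_coeff_mult)
  finally have tt2: "g1*g1 dvd t*t" by simp
  have "t*t = g1*g1"
    by (rule associated_eqI[OF tt1 tt2]) (simp_all add: monic_normalize lead_coeff_mult tmonic g1_monic)
  hence "(t+g1)*(t+g1) = 2*(g1*g1) + 2*(t*g1)" by (simp add: algebra_simps)
  hence "(t+g1)*(t+g1) = 0" using char2_two[OF char2] by simp
  hence "t + g1 = 0" by simp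
  hence tg1: "t = g1" using two by (metis add_right_cancel)
  have "(g1*g1)*f' dvd (g1*g1)*(1+m*m)" using D1 ff' g2t tg1 by (simp add: algebra_simps)
  hence "f' dvd 1+m*m" using g1nz by simp
  moreover have "g3 = g1*f'" using t tg1 by simp
  moreover have "g2 = g1*m" using g2t tg1 by simp
  ultimately show ?thesis using ff' cop f'monic by blast
qed

theorem mainTheorem10:
  fixes f g1 g2 g3 :: "'a::{field_gcd,finite} poly"
  assumes char2: "CHAR('a) = 2"
    and f_monic: "lead_coeff f = 1"
    and g1_monic: "lead_coeff g1 = 1" and g1_dvd: "g1 dvd f"
    and g3_monic: "lead_coeff g3 = 1" and g3_dvd: "g3 dvd f"
    and g3_dvd2: "g3 dvd (f div g1) * g2"
    and deg_g2: "g2 = 0 \<or> degree g2 < degree g3"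
  shows "code2 f g1 g2 g3 = dual2 f (code2 f g1 g2 g3) \<longleftrightarrow>
           ((g1 = g3 \<and> g2 = 0 \<and> f = g1 ^ 2) \<or>
            (\<exists>f' h. f = g1 ^ 2 * f' \<and> g3 = g1 * f' \<and> g2 = g1 * (h * sqrt2 f' + 1) \<and>
                    (h = 0 \<or> degree h < degree f' - degree (sqrt2 f'))))"
proof
  have fnz: "f \<noteq> 0" and g1nz: "g1 \<noteq> 0" using f_monic g1_monic by auto
  have two: "(2::'a poly) = 0" using char2_two[OF char2] .
  assume SD: "code2 f g1 g2 g3 = dual2 f (code2 f g1 g2 g3)"
  obtain f' m where H: "f = g1*g1*f'" "g3 = g1*f'" "g2 = g1*m" "f' dvd 1 + m*m" "coprime f' m"
      "lead_coeff f' = 1"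
    using nec[OF char2 f_monic g1_monic g1_dvd g3_monic g3_dvd g3_dvd2 SD] by blast
  have f'nz: "f' \<noteq> 0" using H(6) by auto
  show "(g1 = g3 \<and> g2 = 0 \<and> f = g1 ^ 2) \<or>
            (\<exists>f' h. f = g1 ^ 2 * f' \<and> g3 = g1 * f' \<and> g2 = g1 * (h * sqrt2 f' + 1) \<and>
                    (h = 0 \<or> degree h < degree f' - degree (sqrt2 f')))"
  proof (cases "m = 0")
    case True
    hence "is_unit f'" using H(5) by simp
    hence "normalize f' = 1" by (rule is_unit_normalize)
    hence "f' = 1" using H(6) by (simp add: monic_normalize)
    thus ?thesis using H True by (simp add: power2_eq_square)
  next
    case False
    define s where "s = sqrt2 f'"
    have snz: "s \<noteq> 0" unfolding s_def by (rule sqrt2_nz)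
    have "(1+m)^2 = (1+m*m) + 2*m" by (simp add: algebra_simps power2_eq_square)
    hence "(1+m)^2 = 1+m*m" using two by simp
    hence "f' dvd (1+m)^2" using H(4) by simp
    hence "s dvd 1+m" unfolding s_def using f'nz sqrt2_dvd by blast
    then obtain h where h: "1+m = s*h" by blast
    have "h*s + 1 = m + 2" using h by (simp add: algebra_simps)
    hence hm: "h*s + 1 = m" using two by simp
    have "g2 \<noteq> 0" using H(3) g1nz False by simp
    hence "degree g2 < degree g3" using deg_g2 by simp
    hence dm: "degree m < degree f'" using H(2,3) g1nz False f'nz by (simp add: degree_mult_eq)
    have "h = 0 \<or> degree h < degree f' - degree s"
    proof (cases "h = 0")
      case False
      have "degree (h*s) = degree h + degree s" using False snz by (simp add: degree_mult_eq)
      moreover have "degree (h*s) \<le> degree m"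
      proof -
        have "degree (h*s) = degree (1+m)" using h by (simp add: mult.commute)
        also have "\<dots> \<le> max (degree (1::'a poly)) (degree m)" by (rule degree_add_le_max)
        finally show ?thesis by simp
      qed
      ultimately show ?thesis using dm by linarith
    qed simp
    hence "\<exists>f' h. f = g1 ^ 2 * f' \<and> g3 = g1 * f' \<and> g2 = g1 * (h * sqrt2 f' + 1) \<and>
                    (h = 0 \<or> degree h < degree f' - degree (sqrt2 f'))"
      using H hm unfolding s_def by (intro exI[of _ f'] exI[of _ h]) (simp add: power2_eq_square)
    thus ?thesis by blast
  qed
next
  have fnz: "f \<noteq> 0" using f_monic by auto
  have two: "(2::'a poly) = 0" using char2_two[OF char2] .
  assume "(g1 = g3 \<and> g2 = 0 \<and> f = g1 ^ 2) \<or>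
            (\<exists>f' h. f = g1 ^ 2 * f' \<and> g3 = g1 * f' \<and> g2 = g1 * (h * sqrt2 f' + 1) \<and>
                    (h = 0 \<or> degree h < degree f' - degree (sqrt2 f')))"
  thus "code2 f g1 g2 g3 = dual2 f (code2 f g1 g2 g3)"
  proof
    assume "g1 = g3 \<and> g2 = 0 \<and> f = g1 ^ 2"
    thus ?thesis by (intro suff[where f'=1 and m=0]) (auto simp: power2_eq_square fnz)
  next
    assume "\<exists>f' h. f = g1 ^ 2 * f' \<and> g3 = g1 * f' \<and> g2 = g1 * (h * sqrt2 f' + 1) \<and>
                    (h = 0 \<or> degree h < degree f' - degree (sqrt2 f'))"
    then obtain f' h where H: "f = g1 ^ 2 * f'" "g3 = g1 * f'" "g2 = g1 * (h * sqrt2 f' + 1)" by blast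
    have f'nz: "f' \<noteq> 0" using H(1) fnz by auto
    have "1 + (h * sqrt2 f' + 1)*(h * sqrt2 f' + 1) = (sqrt2 f')^2 * (h*h) + 2*(h*sqrt2 f' + 1)"
      by (simp add: algebra_simps power2_eq_square)
    hence e: "1 + (h * sqrt2 f' + 1)*(h * sqrt2 f' + 1) = (sqrt2 f')^2 * (h*h)" using two by simp
    have "f' dvd 1 + (h * sqrt2 f' + 1)*(h * sqrt2 f' + 1)"
      unfolding e using dvd_sqrt2_sq[OF f'nz] by simp
    thus ?thesis using H fnz by (intro suff[where f'=f' and m="h * sqrt2 f' + 1"]) (auto simp: power2_eq_square)
  qed
qed

end
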